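(* Let $X\in\mathbb R^{n\times p}$ be fixed, let $\mathbf y\in\mathbb R^n$ be a random vector with independent components satisfying, for some $\sigma\ge0$, $\mathbb E\,e^{t(\mathbf y_i-\mathbb E\mathbf y_i)}\le e^{\sigma^2t^2/2}$ for all $i$ and all $t\in\mathbb R$, and let $\hat Q(\beta)=\|X\beta-\mathbf y\|_2^2$. Let $\mathrm{cl}$ be a coding length with coding complexity $c(\cdot)$. For $\lambda>0$ let $\hat\beta_{pen}$ be a minimizer over $\beta\in\mathbb R^p$ of $\hat Q(\beta)+\lambda c(\beta)$. Fix a target $\bar\beta\in\mathbb R^p$ and $\eta\in(0,1)$. Then with probability exceeding $1-\eta$, for all $\lambda>7.4\sigma^2$ and all $a\ge 7.4\sigma^2/(\lambda-7.4\sigma^2)$, \[ \|X\hat\beta_{pen}-\mathbb E\mathbf y\|_2^2\le(1+a)^2\|X\bar\beta-\mathbb E\mathbf y\|_2^2+(1+a)\lambda c(\bar\beta)+\sigma^2(10+5a+7a^{-1})\ln(6/\eta). \]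
   Context: Let $\mathcal I=\{1,\ldots,p\}$ and $\mathrm{supp}(\beta)=\{j:\beta_j\ne0\}$. A function $\mathrm{cl}$ from subsets of $\mathcal I$ to $[0,\infty]$ is a coding length if $\sum_{F\subset\mathcal I,\,F\ne\emptyset}2^{-\mathrm{cl}(F)}\le1$, with $\mathrm{cl}(\emptyset)=0$. The coding complexity is $c(F)=|F|+\mathrm{cl}(F)$ for $F\subset\mathcal I$, and $c(\beta)=\min\{c(F):\mathrm{supp}(\beta)\subset F\}$ for $\beta\in\mathbb R^p$. *)

theory Defs
  imports "HOL-Probability.Probability"
begin

definition supp :: "real^'p \<Rightarrow> 'p set" where
  "supp \<beta> = {j. \<beta> $ j \<noteq> 0}"

text \<open>Coding length: values in [0,\<infinity>] (as ereal), cl {} = 0, Kraft inequality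
  over nonempty subsets (terms with cl F = \<infinity> contribute 2^(-\<infinity>) = 0).\<close>
definition coding_length :: "('p::finite set \<Rightarrow> ereal) \<Rightarrow> bool" where
  "coding_length cl \<longleftrightarrow> (\<forall>F. 0 \<le> cl F) \<and> cl {} = 0 \<and>
     (\<Sum>F\<in>{F. F \<noteq> {} \<and> cl F \<noteq> \<infinity>}. (2::real) powr (- real_of_ereal (cl F))) \<le> 1"

definition cc_set :: "('p::finite set \<Rightarrow> ereal) \<Rightarrow> 'p set \<Rightarrow> ereal" where
  "cc_set cl F = ereal (real (card F)) + cl F"

definition cc :: "('p::finite set \<Rightarrow> ereal) \<Rightarrow> real^'p \<Rightarrow> ereal" where
  "cc cl \<beta> = Min {cc_set cl F | F. supp \<beta> \<subseteq> F}"

definition Qhat :: "real^'p^'n \<Rightarrow> real^'n \<Rightarrow> real^'p \<Rightarrow> real" where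
  "Qhat X y \<beta> = (norm (X *v \<beta> - y))\<^sup>2"

end

theory Submission
  imports Defs
begin

abbreviation SN :: "real measure" where
  "SN \<equiv> density lborel (\<lambda>x. ennreal (std_normal_density x))"

lemma nn_integral_normal_density: "0 < s \<Longrightarrow> (\<integral>\<^sup>+x. ennreal (normal_density m s x) \<partial>lborel) = 1"
proof -
  assume s: "0 < s"
  interpret prob_space "density lborel (\<lambda>x. ennreal (normal_density m s x))"
    using prob_space_normal_density[OF s] .
  have "emeasure (density lborel (\<lambda>x. ennreal (normal_density m s x))) UNIV = 1"
    using emeasure_space_1 by simp
  then show ?thesis by (simp add: emeasure_density)
qed

lemma prob_space_SN: "prob_space SN"
  using prob_space_normal_density[of 1 0] by simp

lemma gauss_mgf: "(\<integral>\<^sup>+x. ennreal (exp (c * x)) \<partial>SN) = ennreal (exp (c\<^sup>2 / 2))"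
proof -
  have eq: "ennreal (std_normal_density x) * ennreal (exp (c * x))
      = ennreal (exp (c\<^sup>2 / 2)) * ennreal (normal_density c 1 x)" for x
  proof -
    have "std_normal_density x * exp (c * x) = exp (c\<^sup>2 / 2) * normal_density c 1 x"
      by (simp add: normal_density_def mult_exp_exp power2_eq_square algebra_simps add_divide_distrib[symmetric])
    then show ?thesis by (simp add: ennreal_mult'[symmetric])
  qed
  have "(\<integral>\<^sup>+x. ennreal (exp (c * x)) \<partial>SN) = (\<integral>\<^sup>+x. ennreal (std_normal_density x) * ennreal (exp (c * x)) \<partial>lborel)"
    by (subst nn_integral_density) auto
  also have "\<dots> = (\<integral>\<^sup>+x. ennreal (exp (c\<^sup>2 / 2)) * ennreal (normal_density c 1 x) \<partial>lborel)"
    by (simp add: eq)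
  also have "\<dots> = ennreal (exp (c\<^sup>2 / 2))"
    by (subst nn_integral_cmult) (auto simp: nn_integral_normal_density)
  finally show ?thesis .
qed

lemma gauss_sq: assumes k: "k < 1/2"
  shows "(\<integral>\<^sup>+x. ennreal (exp (k * x\<^sup>2)) \<partial>SN) = ennreal (1 / sqrt (1 - 2 * k))"
proof -
  define s where "s = 1 / sqrt (1 - 2 * k)"
  have pk: "0 < 1 - 2 * k" using k by simp
  have s0: "0 < s" using pk by (simp add: s_def)
  have s2: "s\<^sup>2 = 1 / (1 - 2 * k)" using pk by (simp add: s_def power_divide)
  have eq: "ennreal (std_normal_density x) * ennreal (exp (k * x\<^sup>2))
      = ennreal s * ennreal (normal_density 0 s x)" for x
  proof -
    have "sqrt (2 * pi * s\<^sup>2) = sqrt (2 * pi) * s" using s0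
      by (simp add: real_sqrt_mult)
    have ex: "- (x - 0)\<^sup>2 / (2 * s\<^sup>2) = - x\<^sup>2 / 2 + k * x\<^sup>2"
    proof -
      have "1 / s\<^sup>2 = 1 - 2 * k" using s2 pk by simp
      moreover have "x\<^sup>2 / (2 * s\<^sup>2) = (x\<^sup>2 / 2) * (1 / s\<^sup>2)" by simp
      ultimately have "x\<^sup>2 / (2 * s\<^sup>2) = x\<^sup>2 * (1 - 2 * k) / 2" by simp
      then show ?thesis by (simp add: algebra_simps)
    qed
    have "normal_density 0 s x = 1 / (sqrt (2 * pi) * s) * exp (- x\<^sup>2 / 2 + k * x\<^sup>2)"
      unfolding normal_density_def ex \<open>sqrt (2 * pi * s\<^sup>2) = sqrt (2 * pi) * s\<close> ..
    then have "std_normal_density x * exp (k * x\<^sup>2) = s * normal_density 0 s x"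
    proof -
      have "exp (k * x\<^sup>2) * exp (- x\<^sup>2 / 2) = exp (- x\<^sup>2 / 2 + k * x\<^sup>2)"
        by (simp add: mult_exp_exp add.commute)
      then show ?thesis using s0 by (simp add: std_normal_density_def \<open>normal_density 0 s x = _\<close> mult.commute)
    qed
    then show ?thesis using s0 by (simp add: ennreal_mult'[symmetric])
  qed
  have "(\<integral>\<^sup>+x. ennreal (exp (k * x\<^sup>2)) \<partial>SN) = (\<integral>\<^sup>+x. ennreal (std_normal_density x) * ennreal (exp (k * x\<^sup>2)) \<partial>lborel)"
    by (subst nn_integral_density) auto
  also have "\<dots> = (\<integral>\<^sup>+x. ennreal s * ennreal (normal_density 0 s x) \<partial>lborel)"
    by (simp add: eq)
  also have "\<dots> = ennreal s"
    by (subst nn_integral_cmult) (auto simp: nn_integral_normal_density s0)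
  finally show ?thesis by (simp add: s_def)
qed


locale subg = prob_space M for M :: "'a measure" +
  fixes y :: "'a \<Rightarrow> real^'n::finite" and \<sigma> :: real
  assumes indep: "indep_vars (\<lambda>_. borel) (\<lambda>i \<omega>. y \<omega> $ i) UNIV"
    and integ: "\<And>i. integrable M (\<lambda>\<omega>. y \<omega> $ i)"
    and sigma0: "\<sigma> \<ge> 0"
    and mgf_integ: "\<And>i t. integrable M
          (\<lambda>\<omega>. exp (t * (y \<omega> $ i - expectation (\<lambda>\<omega>'. y \<omega>' $ i))))"
    and subgauss: "\<And>i t. expectation
          (\<lambda>\<omega>. exp (t * (y \<omega> $ i - expectation (\<lambda>\<omega>'. y \<omega>' $ i))))
          \<le> exp (\<sigma>\<^sup>2 * t\<^sup>2 / 2)"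
begin

definition Ey :: "'n \<Rightarrow> real" where "Ey i = expectation (\<lambda>\<omega>. y \<omega> $ i)"
definition e :: "'a \<Rightarrow> 'n \<Rightarrow> real" where "e \<omega> i = y \<omega> $ i - Ey i"

lemma meas_y[measurable]: "(\<lambda>\<omega>. y \<omega> $ i) \<in> borel_measurable M"
  using integ by auto

lemma meas_e[measurable]: "(\<lambda>\<omega>. e \<omega> i) \<in> borel_measurable M"
  unfolding e_def by measurable

lemma mgf_lin:
  "(\<integral>\<^sup>+\<omega>. ennreal (exp (\<Sum>i\<in>UNIV. t i * e \<omega> i)) \<partial>M) \<le> ennreal (exp (\<sigma>\<^sup>2 * (\<Sum>i\<in>UNIV. (t i)\<^sup>2) / 2))"
proof -
  have ind: "indep_vars (\<lambda>_. borel) (\<lambda>i \<omega>. ennreal (exp (t i * e \<omega> i))) UNIV"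
  proof -
    have "indep_vars (\<lambda>_. borel) (\<lambda>i \<omega>. (\<lambda>x. ennreal (exp (t i * (x - Ey i)))) (y \<omega> $ i)) UNIV"
      by (rule indep_vars_compose2[OF indep]) measurable
    then show ?thesis by (simp add: e_def)
  qed
  have "(\<integral>\<^sup>+\<omega>. ennreal (exp (\<Sum>i\<in>UNIV. t i * e \<omega> i)) \<partial>M)
      = (\<integral>\<^sup>+\<omega>. (\<Prod>i\<in>UNIV. ennreal (exp (t i * e \<omega> i))) \<partial>M)"
    by (simp add: exp_sum prod_ennreal)
  also have "\<dots> = (\<Prod>i\<in>UNIV. \<integral>\<^sup>+\<omega>. ennreal (exp (t i * e \<omega> i)) \<partial>M)"
    by (rule indep_vars_nn_integral[OF _ ind]) auto
  also have "\<dots> \<le> (\<Prod>i\<in>UNIV. ennreal (exp (\<sigma>\<^sup>2 * (t i)\<^sup>2 / 2)))"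
  proof (rule prod_mono_ennreal)
    fix i :: 'n
    have "(\<integral>\<^sup>+\<omega>. ennreal (exp (t i * e \<omega> i)) \<partial>M) = ennreal (expectation (\<lambda>\<omega>. exp (t i * e \<omega> i)))"
      by (rule nn_integral_eq_integral) (auto simp: e_def Ey_def mgf_integ)
    also have "\<dots> \<le> ennreal (exp (\<sigma>\<^sup>2 * (t i)\<^sup>2 / 2))"
      using subgauss[of "t i" i] by (auto simp: e_def Ey_def intro!: ennreal_leI)
    finally show "(\<integral>\<^sup>+\<omega>. ennreal (exp (t i * e \<omega> i)) \<partial>M) \<le> ennreal (exp (\<sigma>\<^sup>2 * (t i)\<^sup>2 / 2))" .
  qed
  also have "\<dots> = ennreal (exp (\<sigma>\<^sup>2 * (\<Sum>i\<in>UNIV. (t i)\<^sup>2) / 2))"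
    by (simp add: prod_ennreal exp_sum[symmetric] sum_distrib_left sum_divide_distrib)
  finally show ?thesis .
qed

end


lemma orthonormal_sumsq:
  fixes B :: "(real^'n::finite) set"
  assumes fin: "finite B" and orth: "pairwise orthogonal B" and nrm: "\<And>b. b \<in> B \<Longrightarrow> norm b = 1"
  shows "(\<Sum>i\<in>UNIV. (\<Sum>b\<in>B. g b * b $ i)\<^sup>2) = (\<Sum>b\<in>B. (g b)\<^sup>2)"
proof -
  define v where "v = (\<Sum>b\<in>B. g b *\<^sub>R b)"
  have "(\<Sum>i\<in>UNIV. (\<Sum>b\<in>B. g b * b $ i)\<^sup>2) = v \<bullet> v"
    by (simp add: v_def inner_vec_def sum_component power2_eq_square)
  also have "\<dots> = (norm v)\<^sup>2" by (simp add: power2_norm_eq_inner)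
  also have "\<dots> = (\<Sum>b\<in>B. (norm (g b *\<^sub>R b))\<^sup>2)"
    unfolding v_def
    by (rule norm_sum_Pythagorean[OF fin]) (use orth in \<open>auto simp: pairwise_def orthogonal_clauses\<close>)
  also have "\<dots> = (\<Sum>b\<in>B. (g b)\<^sup>2)" by (simp add: nrm power_mult_distrib)
  finally show ?thesis .
qed

context subg begin

definition ip :: "'a \<Rightarrow> real^'n \<Rightarrow> real" where "ip \<omega> b = (\<Sum>i\<in>UNIV. e \<omega> i * b $ i)"

lemma meas_ip[measurable]: "(\<lambda>\<omega>. ip \<omega> b) \<in> borel_measurable M"
  unfolding ip_def by measurable

lemma quad_mgf:
  fixes B :: "(real^'n) set"
  assumes fin: "finite B" and orth: "pairwise orthogonal B" and nrm: "\<And>b. b \<in> B \<Longrightarrow> norm b = 1"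
    and s0: "0 \<le> s" and s1: "2 * \<sigma>\<^sup>2 * s < 1"
  shows "(\<integral>\<^sup>+\<omega>. ennreal (exp (s * (\<Sum>b\<in>B. (ip \<omega> b)\<^sup>2))) \<partial>M)
     \<le> ennreal ((1 / sqrt (1 - 2 * (\<sigma>\<^sup>2 * s))) ^ card B)"
proof -
  interpret PS: product_prob_space "\<lambda>_::real^'n. SN"
    by (simp add: product_prob_space_def product_prob_space_axioms_def prob_space_SN product_sigma_finite_def prob_space_imp_sigma_finite)
  define P where "P = PiM B (\<lambda>_. SN)"
  interpret P: prob_space P unfolding P_def by (rule prob_space_PiM) (rule prob_space_SN)
  define c where "c = sqrt (2 * s)"
  have c2: "c\<^sup>2 = 2 * s" using s0 by (simp add: c_def)
  define H where "H \<omega> g = ennreal (exp (\<Sum>b\<in>B. c * g b * ip \<omega> b))" for \<omega> g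
  have Hm: "(\<lambda>(g, \<omega>). H \<omega> g) \<in> borel_measurable (P \<Otimes>\<^sub>M M)"
    unfolding H_def P_def by measurable
  have step1: "ennreal (exp (s * (\<Sum>b\<in>B. (ip \<omega> b)\<^sup>2))) = (\<integral>\<^sup>+g. H \<omega> g \<partial>P)" for \<omega>
  proof -
    have "(\<integral>\<^sup>+g. H \<omega> g \<partial>P) = (\<integral>\<^sup>+g. (\<Prod>b\<in>B. (\<lambda>x. ennreal (exp ((c * ip \<omega> b) * x))) (g b)) \<partial>P)"
      unfolding H_def by (simp add: exp_sum[OF fin] prod_ennreal mult_ac)
    also have "\<dots> = (\<Prod>b\<in>B. \<integral>\<^sup>+x. ennreal (exp ((c * ip \<omega> b) * x)) \<partial>SN)"
      unfolding P_def by (rule PS.product_nn_integral_prod[OF fin]) measurable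
    also have "\<dots> = (\<Prod>b\<in>B. ennreal (exp (s * (ip \<omega> b)\<^sup>2)))"
      by (simp add: gauss_mgf power_mult_distrib c2)
    also have "\<dots> = ennreal (exp (s * (\<Sum>b\<in>B. (ip \<omega> b)\<^sup>2)))"
      by (simp add: prod_ennreal exp_sum[OF fin, symmetric] sum_distrib_left)
    finally show ?thesis by simp
  qed
  have "(\<integral>\<^sup>+\<omega>. ennreal (exp (s * (\<Sum>b\<in>B. (ip \<omega> b)\<^sup>2))) \<partial>M) = (\<integral>\<^sup>+\<omega>. \<integral>\<^sup>+g. H \<omega> g \<partial>P \<partial>M)"
    by (simp add: step1)
  also have "\<dots> = (\<integral>\<^sup>+g. \<integral>\<^sup>+\<omega>. H \<omega> g \<partial>M \<partial>P)"
  proof -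
    interpret PM: pair_sigma_finite P M
      by (simp add: pair_sigma_finite_def P.sigma_finite_measure_axioms sigma_finite_measure_axioms)
    show ?thesis using PM.Fubini'[OF Hm] by simp
  qed
  also have "\<dots> \<le> (\<integral>\<^sup>+g. ennreal (exp (\<sigma>\<^sup>2 * s * (\<Sum>b\<in>B. (g b)\<^sup>2))) \<partial>P)"
  proof (rule nn_integral_mono)
    fix g
    define t where "t i = c * (\<Sum>b\<in>B. g b * b $ i)" for i
    have "(\<Sum>b\<in>B. c * g b * ip \<omega> b) = (\<Sum>i\<in>UNIV. t i * e \<omega> i)" for \<omega>
      unfolding t_def ip_def
      by (simp add: sum_distrib_left sum_distrib_right mult_ac sum.swap[of _ B])
    then have "(\<integral>\<^sup>+\<omega>. H \<omega> g \<partial>M) = (\<integral>\<^sup>+\<omega>. ennreal (exp (\<Sum>i\<in>UNIV. t i * e \<omega> i)) \<partial>M)"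
      by (simp add: H_def)
    also have "\<dots> \<le> ennreal (exp (\<sigma>\<^sup>2 * (\<Sum>i\<in>UNIV. (t i)\<^sup>2) / 2))"
      by (rule mgf_lin)
    also have "(\<Sum>i\<in>UNIV. (t i)\<^sup>2) = c\<^sup>2 * (\<Sum>b\<in>B. (g b)\<^sup>2)"
      unfolding t_def power_mult_distrib sum_distrib_left[symmetric]
      using orthonormal_sumsq[OF fin orth nrm] by simp
    finally show "(\<integral>\<^sup>+\<omega>. H \<omega> g \<partial>M) \<le> ennreal (exp (\<sigma>\<^sup>2 * s * (\<Sum>b\<in>B. (g b)\<^sup>2)))"
      by (simp add: c2 mult.assoc)
  qed
  also have "\<dots> = (\<integral>\<^sup>+g. (\<Prod>b\<in>B. (\<lambda>x. ennreal (exp ((\<sigma>\<^sup>2 * s) * x\<^sup>2))) (g b)) \<partial>P)"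
    by (simp add: exp_sum[OF fin] prod_ennreal sum_distrib_left)
  also have "\<dots> = (\<Prod>b\<in>B. \<integral>\<^sup>+x. ennreal (exp ((\<sigma>\<^sup>2 * s) * x\<^sup>2)) \<partial>SN)"
    unfolding P_def by (rule PS.product_nn_integral_prod[OF fin]) measurable
  also have "\<dots> = (\<Prod>b\<in>B. ennreal (1 / sqrt (1 - 2 * (\<sigma>\<^sup>2 * s))))"
    using s1 by (simp add: gauss_sq)
  also have "\<dots> = ennreal ((1 / sqrt (1 - 2 * (\<sigma>\<^sup>2 * s))) ^ card B)"
    using s1 by (simp add: ennreal_power[symmetric] mult_ac)
  finally show ?thesis .
qed

end


context subg begin

lemma quad_tail:
  fixes B :: "(real^'n) set"
  assumes fin: "finite B" and orth: "pairwise orthogonal B" and nrm: "\<And>b. b \<in> B \<Longrightarrow> norm b = 1"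
    and x0: "0 \<le> x"
  shows "prob {\<omega>\<in>space M. \<sigma>\<^sup>2 * x < (\<Sum>b\<in>B. (ip \<omega> b)\<^sup>2)} \<le> sqrt 3 ^ card B * exp (- x / 3)"
proof -
  define S where "S = {\<omega>\<in>space M. \<sigma>\<^sup>2 * x < (\<Sum>b\<in>B. (ip \<omega> b)\<^sup>2)}"
  have Sm: "S \<in> sets M" unfolding S_def by measurable
  show ?thesis
  proof (cases "\<sigma> = 0")
    case False
    then have sp: "0 < \<sigma>\<^sup>2" by simp
    define s where "s = 1 / (3 * \<sigma>\<^sup>2)"
    have s0: "0 \<le> s" using sp by (simp add: s_def)
    have ss: "\<sigma>\<^sup>2 * s = 1 / 3" using sp by (simp add: s_def)
    have mgf: "(\<integral>\<^sup>+\<omega>. ennreal (exp (s * (\<Sum>b\<in>B. (ip \<omega> b)\<^sup>2))) \<partial>M) \<le> ennreal (sqrt 3 ^ card B)"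
    proof -
      have "2 * \<sigma>\<^sup>2 * s < 1" using ss by simp
      from quad_mgf[OF fin orth nrm s0 this] have "(\<integral>\<^sup>+\<omega>. ennreal (exp (s * (\<Sum>b\<in>B. (ip \<omega> b)\<^sup>2))) \<partial>M)
         \<le> ennreal ((1 / sqrt (1 - 2 * (1/3))) ^ card B)" by (simp add: ss)
      also have "1 / sqrt (1 - 2 * (1/3::real)) = sqrt 3"
        by (simp add: real_sqrt_divide)
      finally show ?thesis .
    qed
    have "(\<integral>\<^sup>+\<omega>. ennreal (exp (x / 3)) * indicator S \<omega> \<partial>M) \<le> (\<integral>\<^sup>+\<omega>. ennreal (exp (s * (\<Sum>b\<in>B. (ip \<omega> b)\<^sup>2))) \<partial>M)"
    proof (rule nn_integral_mono)
      fix \<omega> assume "\<omega> \<in> space M"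
      show "ennreal (exp (x / 3)) * indicator S \<omega> \<le> ennreal (exp (s * (\<Sum>b\<in>B. (ip \<omega> b)\<^sup>2)))"
      proof (cases "\<omega> \<in> S")
        case True
        then have "\<sigma>\<^sup>2 * x < (\<Sum>b\<in>B. (ip \<omega> b)\<^sup>2)" by (simp add: S_def)
        then have "s * (\<sigma>\<^sup>2 * x) \<le> s * (\<Sum>b\<in>B. (ip \<omega> b)\<^sup>2)" using s0 by (intro mult_left_mono) auto
        moreover have "s * (\<sigma>\<^sup>2 * x) = (\<sigma>\<^sup>2 * s) * x" by (simp add: mult_ac)
        ultimately have "x / 3 \<le> s * (\<Sum>b\<in>B. (ip \<omega> b)\<^sup>2)" using ss by simp
        then show ?thesis using True by (simp add: ennreal_leI)
      qed simp
    qed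
    also note mgf
    finally have "ennreal (exp (x / 3)) * emeasure M S \<le> ennreal (sqrt 3 ^ card B)"
      using Sm by (simp add: nn_integral_cmult_indicator)
    then have "ennreal (exp (x / 3) * prob S) \<le> ennreal (sqrt 3 ^ card B)"
      by (simp add: emeasure_eq_measure ennreal_mult')
    then have "exp (x / 3) * prob S \<le> sqrt 3 ^ card B"
      by (subst (asm) ennreal_le_iff) auto
    then have "prob S \<le> sqrt 3 ^ card B / exp (x / 3)"
      by (simp add: field_simps)
    then show ?thesis by (simp add: S_def exp_minus field_simps)
  next
    case True
    define Z where "Z \<omega> = (\<Sum>b\<in>B. (ip \<omega> b)\<^sup>2)" for \<omega>
    have Zm[measurable]: "Z \<in> borel_measurable M" unfolding Z_def by measurable
    have Z0: "0 \<le> Z \<omega>" for \<omega> unfolding Z_def by (simp add: sum_nonneg)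
    have "(\<integral>\<^sup>+\<omega>. ennreal (exp (1 * Z \<omega>)) \<partial>M) \<le> ennreal ((1 / sqrt (1 - 2 * (\<sigma>\<^sup>2 * 1))) ^ card B)"
      unfolding Z_def by (rule quad_mgf[OF fin orth nrm]) (use True in auto)
    then have m1: "(\<integral>\<^sup>+\<omega>. ennreal (exp (Z \<omega>)) \<partial>M) \<le> 1" using True by simp
    have "(\<integral>\<^sup>+\<omega>. 1 + ennreal (Z \<omega>) \<partial>M) \<le> (\<integral>\<^sup>+\<omega>. ennreal (exp (Z \<omega>)) \<partial>M)"
    proof (rule nn_integral_mono)
      fix \<omega>
      have "1 + Z \<omega> \<le> exp (Z \<omega>)" by (rule exp_ge_add_one_self)
      then show "1 + ennreal (Z \<omega>) \<le> ennreal (exp (Z \<omega>))"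
        using Z0[of \<omega>] by (metis ennreal_1 ennreal_leI ennreal_plus zero_le_one)
    qed
    also note m1
    finally have "1 + (\<integral>\<^sup>+\<omega>. ennreal (Z \<omega>) \<partial>M) \<le> 1 + 0"
      by (subst (asm) nn_integral_add) (auto simp: emeasure_space_1)
    then have "(\<integral>\<^sup>+\<omega>. ennreal (Z \<omega>) \<partial>M) = 0"
      by (subst (asm) ennreal_add_left_cancel_le) auto
    then have "AE \<omega> in M. ennreal (Z \<omega>) = 0"
      by (subst (asm) nn_integral_0_iff_AE) auto
    then have "AE \<omega> in M. \<not> (\<sigma>\<^sup>2 * x < Z \<omega>)"
      by eventually_elim (use True Z0 in auto)
    then have "emeasure M S = 0"
      by (subst (asm) AE_iff_measurable[OF Sm]) (auto simp: S_def Z_def)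
    then have "prob S = 0" by (simp add: emeasure_eq_measure)
    then show ?thesis by (simp add: S_def)
  qed
qed

end


lemma onb_exists:
  fixes G :: "(real^'n::finite) set"
  assumes "finite G"
  shows "\<exists>B. finite B \<and> pairwise orthogonal B \<and> (\<forall>b\<in>B. norm b = 1) \<and> span B = span G \<and> card B \<le> card G"
proof -
  obtain B where B: "B \<subseteq> span G" "pairwise orthogonal B" "\<And>x. x \<in> B \<Longrightarrow> norm x = 1"
    "independent B" "card B = dim (span G)" "span B = span G"
    by (rule orthonormal_basis_subspace[OF subspace_span]) blast
  have "finite B" using B(4) by (simp add: finiteI_independent)
  moreover have "card B \<le> card G" using B(5) assms by (simp add: dim_span dim_le_card')
  ultimately show ?thesis using B by blast
qed

lemma cs_span:
  fixes B :: "(real^'n::finite) set"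
  assumes fin: "finite B" and orth: "pairwise orthogonal B" and nrm: "\<And>b. b \<in> B \<Longrightarrow> norm b = 1"
    and w: "w \<in> span B"
  shows "(v \<bullet> w)\<^sup>2 \<le> (norm w)\<^sup>2 * (\<Sum>b\<in>B. (v \<bullet> b)\<^sup>2)"
proof -
  have we: "(\<Sum>b\<in>B. (w \<bullet> b) *\<^sub>R b) = w"
    by (rule orthonormal_basis_expand[OF orth nrm w fin])
  have "v \<bullet> w = (\<Sum>b\<in>B. (w \<bullet> b) * (v \<bullet> b))"
    by (subst we[symmetric]) (simp add: inner_sum_right)
  then have "(v \<bullet> w)\<^sup>2 \<le> (\<Sum>b\<in>B. (w \<bullet> b)\<^sup>2) * (\<Sum>b\<in>B. (v \<bullet> b)\<^sup>2)"
    by (simp add: Cauchy_Schwarz_ineq_sum)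
  moreover have "(norm w)\<^sup>2 = (\<Sum>b\<in>B. (w \<bullet> b)\<^sup>2)"
  proof -
    have "(norm w)\<^sup>2 = (norm (\<Sum>b\<in>B. (w \<bullet> b) *\<^sub>R b))\<^sup>2" by (simp add: we)
    also have "\<dots> = (\<Sum>b\<in>B. (norm ((w \<bullet> b) *\<^sub>R b))\<^sup>2)"
      by (rule norm_sum_Pythagorean[OF fin]) (use orth in \<open>auto simp: pairwise_def orthogonal_clauses\<close>)
    also have "\<dots> = (\<Sum>b\<in>B. (w \<bullet> b)\<^sup>2)" by (simp add: nrm power_mult_distrib)
    finally show ?thesis .
  qed
  ultimately show ?thesis by simp
qed

context subg begin

definition ev :: "'a \<Rightarrow> real^'n" where "ev \<omega> = (\<chi> i. e \<omega> i)"

lemma ip_ev: "ip \<omega> b = ev \<omega> \<bullet> b"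
  by (simp add: ip_def ev_def inner_vec_def)

end


lemma amgm2: fixes x y t :: real assumes "0 < t" shows "2 * x * y \<le> t * x\<^sup>2 + y\<^sup>2 / t"
proof -
  have "0 \<le> (t * x - y)\<^sup>2" by simp
  then have "2 * t * x * y \<le> t\<^sup>2 * x\<^sup>2 + y\<^sup>2" by (simp add: power2_eq_square algebra_simps)
  then have "(2 * x * y) * t \<le> (t * x\<^sup>2 + y\<^sup>2 / t) * t" using assms
    by (simp add: power2_eq_square algebra_simps)
  then show ?thesis using assms by (simp add: mult_le_cancel_right)
qed

lemma sq_le_bound: fixes p D Z :: real assumes "p\<^sup>2 \<le> D\<^sup>2 * Z" "0 \<le> D" "0 \<le> Z"
  shows "p \<le> D * sqrt Z"
proof -
  have "\<bar>p\<bar> = sqrt (p\<^sup>2)" by simp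
  also have "\<dots> \<le> sqrt (D\<^sup>2 * Z)" using assms(1) by (rule real_sqrt_le_mono)
  also have "\<dots> = D * sqrt Z" using assms(2) by (simp add: real_sqrt_mult)
  finally show ?thesis by simp
qed

lemma final_ineq:
  fixes D Db p q Z Zb c cb l a \<sigma> L :: real
  assumes D0: "0 \<le> D" and Db0: "0 \<le> Db" and Z0: "0 \<le> Z" and Zb0: "0 \<le> Zb" and c0: "0 \<le> c" and L0: "0 \<le> L"
    and main: "D\<^sup>2 \<le> Db\<^sup>2 + l * cb - l * c + 2 * p - 2 * q"
    and pZ: "p\<^sup>2 \<le> D\<^sup>2 * Z" and qZ: "q\<^sup>2 \<le> Db\<^sup>2 * Zb"
    and Zle: "Z \<le> \<sigma>\<^sup>2 * (7.4 * c + 3.5 * L)" and Zble: "Zb \<le> \<sigma>\<^sup>2 * (3 * L)"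
    and l: "7.4 * \<sigma>\<^sup>2 < l" and a: "7.4 * \<sigma>\<^sup>2 / (l - 7.4 * \<sigma>\<^sup>2) \<le> a"
  shows "D\<^sup>2 \<le> (1 + a)\<^sup>2 * Db\<^sup>2 + (1 + a) * l * cb + \<sigma>\<^sup>2 * (10 + 5 * a + 7 * inverse a) * L"
proof -
  have lp: "0 < l - 7.4 * \<sigma>\<^sup>2" using l by simp
  have s0: "0 \<le> \<sigma>\<^sup>2" by simp
  have "0 \<le> 7.4 * \<sigma>\<^sup>2 / (l - 7.4 * \<sigma>\<^sup>2)" using lp by simp
  then have a0: "0 \<le> a" using a by linarith
  have al: "7.4 * \<sigma>\<^sup>2 \<le> a * (l - 7.4 * \<sigma>\<^sup>2)" using a by (simp only: pos_divide_le_eq[OF lp])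
  have l0: "0 < l" using l s0 by linarith
  have p1: "p \<le> D * sqrt Z" by (rule sq_le_bound[OF pZ D0 Z0])
  have q1: "- q \<le> Db * sqrt Zb" by (rule sq_le_bound) (use qZ Db0 Zb0 in auto)
  show ?thesis
  proof (cases "a = 0")
    case True
    then have "\<sigma>\<^sup>2 \<le> 0" using al by simp
    then have sz: "\<sigma>\<^sup>2 = 0" by simp
    then have "Z = 0" "Zb = 0" using Zle Zble Z0 Zb0 by auto
    then have "p\<^sup>2 \<le> 0" "q\<^sup>2 \<le> 0" using pZ qZ by auto
    then have "p = 0" "q = 0" by auto
    then have "D\<^sup>2 \<le> Db\<^sup>2 + l * cb - l * c" using main by simp
    moreover have "0 \<le> l * c" using l0 c0 by simp
    ultimately show ?thesis using True sz by simp
  next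
    case False
    then have ap: "0 < a" using a0 by simp
    define t where "t = a / (1 + a)"
    have tp: "0 < t" using ap by (simp add: t_def)
    have h1: "2 * p \<le> t * D\<^sup>2 + Z * ((1 + a) / a)"
    proof -
      have "2 * D * sqrt Z \<le> t * D\<^sup>2 + (sqrt Z)\<^sup>2 / t" by (rule amgm2[OF tp])
      also have "(sqrt Z)\<^sup>2 / t = Z * ((1 + a) / a)" using Z0 ap by (simp add: t_def)
      finally show ?thesis using p1 by simp
    qed
    have h2: "- 2 * q \<le> a * Db\<^sup>2 + Zb / a"
    proof -
      have "2 * Db * sqrt Zb \<le> a * Db\<^sup>2 + (sqrt Zb)\<^sup>2 / a" by (rule amgm2[OF ap])
      then show ?thesis using q1 Zb0 by simp
    qed
    have h3: "Z * ((1 + a) / a) \<le> l * c + 3.5 * \<sigma>\<^sup>2 * L * ((1 + a) / a)"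
    proof -
      have r: "0 \<le> (1 + a) / a" using ap by simp
      have "Z * ((1 + a) / a) \<le> \<sigma>\<^sup>2 * (7.4 * c + 3.5 * L) * ((1 + a) / a)"
        by (rule mult_right_mono[OF Zle r])
      also have "\<dots> = (7.4 * \<sigma>\<^sup>2 * (1 + a) / a) * c + 3.5 * \<sigma>\<^sup>2 * L * ((1 + a) / a)"
        by (simp add: algebra_simps)
      also have "7.4 * \<sigma>\<^sup>2 * (1 + a) / a \<le> l"
        using al ap by (simp add: divide_le_eq algebra_simps)
      then have "(7.4 * \<sigma>\<^sup>2 * (1 + a) / a) * c \<le> l * c" using c0 by (rule mult_right_mono)
      finally show ?thesis by simp
    qed
    have h4: "Zb / a \<le> 3 * \<sigma>\<^sup>2 * L / a" using Zble ap by (simp add: divide_right_mono mult_ac)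
    have "D\<^sup>2 * (1 - t) \<le> (1 + a) * Db\<^sup>2 + l * cb + 3.5 * \<sigma>\<^sup>2 * L * ((1 + a) / a) + 3 * \<sigma>\<^sup>2 * L / a"
      using main h1 h2 h3 h4 by (simp add: algebra_simps)
    moreover have "1 - t = 1 / (1 + a)" using ap by (simp add: t_def field_simps)
    ultimately have h5: "D\<^sup>2 \<le> (1 + a) * ((1 + a) * Db\<^sup>2 + l * cb + 3.5 * \<sigma>\<^sup>2 * L * ((1 + a) / a) + 3 * \<sigma>\<^sup>2 * L / a)"
      using ap by (simp add: field_simps)
    have e: "(1 + a) * ((1 + a) * Db\<^sup>2 + l * cb + 3.5 * \<sigma>\<^sup>2 * L * ((1 + a) / a) + 3 * \<sigma>\<^sup>2 * L / a)
      = (1 + a)\<^sup>2 * Db\<^sup>2 + (1 + a) * l * cb + \<sigma>\<^sup>2 * L * (10 + 3.5 * a + 6.5 / a)"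
      using ap by (simp add: field_simps power2_eq_square)
    have "\<sigma>\<^sup>2 * L * (10 + 3.5 * a + 6.5 / a) \<le> \<sigma>\<^sup>2 * L * (10 + 5 * a + 7 * inverse a)"
    proof (rule mult_left_mono)
      show "10 + 3.5 * a + 6.5 / a \<le> 10 + 5 * a + 7 * inverse a"
        using ap by (simp add: field_simps)
      show "0 \<le> \<sigma>\<^sup>2 * L" using L0 by simp
    qed
    then show ?thesis using h5 e by (simp add: mult_ac)
  qed
qed


lemma q_bound: "3 * exp (- (7.4::real) / 3) \<le> 1"
proof -
  have "1 + 7.4 / 3 \<le> exp ((7.4::real) / 3)" by (rule exp_ge_add_one_self)
  then have "3 \<le> exp ((7.4::real) / 3)" by simp
  then show ?thesis by (simp add: exp_minus field_simps)
qed

lemma sqrt3_lt2: "sqrt (3::real) < 2"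
  by (rule real_less_lsqrt) auto

lemma weight_bound:
  fixes r L :: real and k :: nat
  assumes r0: "0 \<le> r" and L0: "0 \<le> L"
  shows "sqrt 3 ^ (k + 1) * exp (- (7.4 * (real k + r) + 3.5 * L) / 3)
     \<le> exp (- L) * (if k = 0 then sqrt 3 else 2 powr (- r))"
proof -
  define q where "q = exp (- (7.4::real) / 3)"
  have q0: "0 < q" by (simp add: q_def)
  have q3: "3 * q \<le> 1" unfolding q_def by (rule q_bound)
  have s3: "sqrt 3 * sqrt 3 = (3::real)" by simp
  have ex: "exp (- (7.4 * (real k + r) + 3.5 * L) / 3) = q ^ k * exp (- 7.4 * r / 3) * exp (- 3.5 * L / 3)"
  proof -
    have qk: "q ^ k = exp (real k * (- 7.4 / 3))" unfolding q_def by (rule exp_of_nat_mult[symmetric])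
    have "q ^ k * exp (- 7.4 * r / 3) * exp (- 3.5 * L / 3) = exp (real k * (- 7.4 / 3) + - 7.4 * r / 3 + - 3.5 * L / 3)"
      unfolding qk exp_add by simp
    also have "real k * (- 7.4 / 3) + - 7.4 * r / 3 + - 3.5 * L / 3 = - (7.4 * (real k + r) + 3.5 * L) / 3"
      by (simp add: algebra_simps)
    finally show ?thesis by simp
  qed
  have eL: "exp (- 3.5 * L / 3) \<le> exp (- L)" using L0 by simp
  have er1: "exp (- 7.4 * r / 3) \<le> 1" using r0 by simp
  have er2: "exp (- 7.4 * r / 3) \<le> 2 powr (- r)"
  proof -
    have "ln 2 \<le> (7.4::real) / 3" using ln_2_less_1 by simp
    then have "r * ln 2 \<le> r * (7.4 / 3)" using r0 by (rule mult_left_mono)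
    then have "- 7.4 * r / 3 \<le> - r * ln 2" by simp
    then show ?thesis by (simp add: powr_def)
  qed
  have pk: "sqrt 3 ^ (k + 1) * q ^ k \<le> (if k = 0 then sqrt 3 else 1)"
  proof (cases "k = 0")
    case False
    have b1: "sqrt 3 * q \<le> 1"
    proof -
      have "sqrt 3 * q \<le> 3 * q" using q0 sqrt3_lt2 by (intro mult_right_mono) auto
      then show ?thesis using q3 by simp
    qed
    have b0: "0 \<le> sqrt 3 * q" using q0 by simp
    have "sqrt 3 ^ (k + 1) * q ^ k = sqrt 3 * (sqrt 3 * q) ^ k" by (simp add: power_mult_distrib)
    also have "(sqrt 3 * q) ^ k \<le> (sqrt 3 * q) ^ 1"
      using False b0 b1 by (intro power_decreasing) auto
    finally have "sqrt 3 ^ (k + 1) * q ^ k \<le> sqrt 3 * (sqrt 3 * q)" by simp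
    also have "\<dots> = 3 * q" using s3 by (simp add: mult.assoc[symmetric])
    finally show ?thesis using False q3 by simp
  qed simp
  have "sqrt 3 ^ (k + 1) * exp (- (7.4 * (real k + r) + 3.5 * L) / 3)
      = (sqrt 3 ^ (k + 1) * q ^ k) * exp (- 7.4 * r / 3) * exp (- 3.5 * L / 3)"
    by (subst ex) (simp add: mult_ac)
  also have "\<dots> \<le> (if k = 0 then sqrt 3 else 1) * exp (- 7.4 * r / 3) * exp (- L)"
    using pk eL by (intro mult_mono) auto
  also have "\<dots> \<le> (if k = 0 then sqrt 3 else 2 powr (- r)) * exp (- L)"
    using er1 er2 by (intro mult_right_mono) auto
  finally show ?thesis by (simp add: mult_ac)
qed

lemma cc_set_nonneg: "coding_length cl \<Longrightarrow> 0 \<le> cc_set cl F"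
  unfolding coding_length_def cc_set_def by auto

lemma cc_fin: "finite {cc_set cl F | F. supp \<beta> \<subseteq> F}"
proof -
  have "{cc_set cl F | F. supp \<beta> \<subseteq> F} = cc_set cl ` {F. supp \<beta> \<subseteq> F}" by auto
  then show ?thesis by simp
qed

lemma cc_attained: "\<exists>F. supp \<beta> \<subseteq> F \<and> cc cl \<beta> = cc_set cl F"
proof -
  have "{cc_set cl F | F. supp \<beta> \<subseteq> F} = cc_set cl ` {F. supp \<beta> \<subseteq> F}" by auto
  then have fin: "finite {cc_set cl F | F. supp \<beta> \<subseteq> F}" by simp
  have ne: "{cc_set cl F | F. supp \<beta> \<subseteq> F} \<noteq> {}" by auto
  from Min_in[OF fin ne] show ?thesis unfolding cc_def by auto
qed

lemma cc_nonneg: "coding_length cl \<Longrightarrow> 0 \<le> cc cl \<beta>"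
  using cc_attained[of \<beta> cl] cc_set_nonneg by metis

lemma cc_zero: "coding_length cl \<Longrightarrow> cc cl 0 = 0"
proof -
  assume cl: "coding_length cl"
  have "cc cl 0 \<le> cc_set cl {}"
    unfolding cc_def by (rule Min_le[OF cc_fin]) (auto simp: supp_def)
  also have "cc_set cl {} = 0" using cl by (simp add: cc_set_def coding_length_def)
  finally show ?thesis using cc_nonneg[OF cl, of 0] by simp
qed

lemma mv_in_span:
  fixes X :: "real^'p::finite^'n::finite"
  assumes "supp \<beta> \<subseteq> F"
  shows "X *v \<beta> \<in> span ((\<lambda>j. column j X) ` F)"
proof -
  have "X *v \<beta> = (\<Sum>j\<in>UNIV. \<beta> $ j *\<^sub>R column j X)"
    by (simp add: matrix_mult_sum scalar_mult_eq_scaleR)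
  also have "\<dots> = (\<Sum>j\<in>F. \<beta> $ j *\<^sub>R column j X)"
    using assms by (intro sum.mono_neutral_right) (auto simp: supp_def)
  also have "\<dots> \<in> span ((\<lambda>j. column j X) ` F)"
    by (intro span_sum span_mul span_base) auto
  finally show ?thesis .
qed

theorem theorem3:
  fixes M :: "'a measure"
    and X :: "real^'p::finite^'n::finite"
    and y :: "'a \<Rightarrow> real^'n"
    and \<sigma> \<eta> :: real
    and cl :: "'p set \<Rightarrow> ereal"
    and \<beta>pen :: "real \<Rightarrow> 'a \<Rightarrow> real^'p"
    and \<beta>bar :: "real^'p"
  assumes "prob_space M"
    and indep: "prob_space.indep_vars M (\<lambda>_. borel) (\<lambda>i \<omega>. y \<omega> $ i) UNIV"
    and integ: "\<And>i. integrable M (\<lambda>\<omega>. y \<omega> $ i)"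
    and "\<sigma> \<ge> 0"
    and mgf_integ: "\<And>i t. integrable M
          (\<lambda>\<omega>. exp (t * (y \<omega> $ i - prob_space.expectation M (\<lambda>\<omega>'. y \<omega>' $ i))))"
    and subgauss: "\<And>i t. prob_space.expectation M
          (\<lambda>\<omega>. exp (t * (y \<omega> $ i - prob_space.expectation M (\<lambda>\<omega>'. y \<omega>' $ i))))
          \<le> exp (\<sigma>\<^sup>2 * t\<^sup>2 / 2)"
    and "coding_length cl"
    and minimizer: "\<And>l \<omega> \<beta>. l > 0 \<Longrightarrow> \<omega> \<in> space M \<Longrightarrow>
          ereal (Qhat X (y \<omega>) (\<beta>pen l \<omega>)) + ereal l * cc cl (\<beta>pen l \<omega>)
          \<le> ereal (Qhat X (y \<omega>) \<beta>) + ereal l * cc cl \<beta>"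
    and "0 < \<eta>" "\<eta> < 1"
  shows "\<exists>A \<in> sets M. prob_space.prob M A > 1 - \<eta> \<and>
     (\<forall>\<omega>\<in>A. \<forall>l > 7.4 * \<sigma>\<^sup>2. \<forall>a \<ge> 7.4 * \<sigma>\<^sup>2 / (l - 7.4 * \<sigma>\<^sup>2).
        (let Ey = (\<chi> i. prob_space.expectation M (\<lambda>\<omega>'. y \<omega>' $ i)) in
         ereal ((norm (X *v \<beta>pen l \<omega> - Ey))\<^sup>2)
         \<le> ereal ((1 + a)\<^sup>2 * (norm (X *v \<beta>bar - Ey))\<^sup>2)
            + ereal ((1 + a) * l) * cc cl \<beta>bar
            + ereal (\<sigma>\<^sup>2 * (10 + 5 * a + 7 * inverse a) * ln (6 / \<eta>))))"
proof -
  have "subg M y \<sigma>"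
    unfolding subg_def subg_axioms_def using \<open>prob_space M\<close> \<open>\<sigma> \<ge> 0\<close> indep integ mgf_integ subgauss by auto
  then interpret S: subg M y \<sigma> .
  have cl: "coding_length cl" by fact
  define f :: "real^'n" where "f = (\<chi> i. S.Ey i)"
  have f_eq: "(\<chi> i. prob_space.expectation M (\<lambda>\<omega>'. y \<omega>' $ i)) = f" by (simp add: f_def S.Ey_def)
  define L where "L = ln (6 / \<eta>)"
  have L0: "0 \<le> L" unfolding L_def using \<open>0 < \<eta>\<close> \<open>\<eta> < 1\<close> by simp
  have eL: "exp (- L) = \<eta> / 6" unfolding L_def using \<open>0 < \<eta>\<close> by (simp add: exp_minus)
  define cols where "cols F = insert f ((\<lambda>j. column j X) ` F)" for F :: "'p set"
  have cols_card: "card (cols F) \<le> card F + 1" for F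
  proof -
    have "card (cols F) \<le> Suc (card ((\<lambda>j. column j X) ` F))" unfolding cols_def by (rule card_insert_le_m1) auto
    also have "card ((\<lambda>j. column j X) ` F) \<le> card F" by (rule card_image_le) simp
    finally show ?thesis by simp
  qed
  define BF where "BF F = (SOME B. finite B \<and> pairwise orthogonal B \<and> (\<forall>b\<in>B. norm b = 1) \<and> span B = span (cols F) \<and> card B \<le> card (cols F))" for F
  have BF: "finite (BF F) \<and> pairwise orthogonal (BF F) \<and> (\<forall>b\<in>BF F. norm b = 1) \<and> span (BF F) = span (cols F) \<and> card (BF F) \<le> card (cols F)" for F
    unfolding BF_def by (rule someI_ex) (rule onb_exists, simp add: cols_def)
  define db where "db = X *v \<beta>bar - f"
  define Bb where "Bb = (SOME B. finite B \<and> pairwise orthogonal B \<and> (\<forall>b\<in>B. norm b = 1) \<and> span B = span {db} \<and> card B \<le> card {db})"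
  have Bb: "finite Bb \<and> pairwise orthogonal Bb \<and> (\<forall>b\<in>Bb. norm b = 1) \<and> span Bb = span {db} \<and> card Bb \<le> card {db}"
    unfolding Bb_def by (rule someI_ex) (rule onb_exists, simp)
  define r where "r F = real_of_ereal (cl F)" for F
  have r0: "0 \<le> r F" for F using cl unfolding r_def coding_length_def by (simp add: real_of_ereal_pos)
  define Fin where "Fin = {F. cl F \<noteq> \<infinity>}"
  define ZF where "ZF F \<omega> = (\<Sum>b\<in>BF F. (S.ip \<omega> b)\<^sup>2)" for F \<omega>
  define Zb where "Zb \<omega> = (\<Sum>b\<in>Bb. (S.ip \<omega> b)\<^sup>2)" for \<omega>
  define bad where "bad F = {\<omega> \<in> space M. \<sigma>\<^sup>2 * (7.4 * (real (card F) + r F) + 3.5 * L) < ZF F \<omega>}" for F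
  define badb where "badb = {\<omega> \<in> space M. \<sigma>\<^sup>2 * (3 * L) < Zb \<omega>}"
  define U where "U = (\<Union>F\<in>Fin. bad F) \<union> badb"
  define A where "A = space M - U"
  have bad_m: "bad F \<in> sets M" for F unfolding bad_def ZF_def by measurable
  have badb_m: "badb \<in> sets M" unfolding badb_def Zb_def by measurable
  have U_m: "U \<in> sets M" unfolding U_def using bad_m badb_m by auto
  have A_m: "A \<in> sets M" unfolding A_def using U_m by auto
  have pbad: "measure M (bad F) \<le> exp (- L) * (if card F = 0 then sqrt 3 else 2 powr (- r F))" for F
  proof -
    have x0: "0 \<le> 7.4 * (real (card F) + r F) + 3.5 * L" using r0[of F] L0 by simp
    have "measure M (bad F) \<le> sqrt 3 ^ card (BF F) * exp (- (7.4 * (real (card F) + r F) + 3.5 * L) / 3)"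
      unfolding bad_def ZF_def using BF[of F] by (intro S.quad_tail[OF _ _ _ x0]) auto
    also have "\<dots> \<le> sqrt 3 ^ (card F + 1) * exp (- (7.4 * (real (card F) + r F) + 3.5 * L) / 3)"
    proof (rule mult_right_mono)
      show "sqrt 3 ^ card (BF F) \<le> sqrt 3 ^ (card F + 1)"
        using BF[of F] cols_card[of F] by (intro power_increasing) auto
    qed simp
    also have "\<dots> \<le> exp (- L) * (if card F = 0 then sqrt 3 else 2 powr (- r F))"
      by (rule weight_bound[OF r0 L0])
    finally show ?thesis .
  qed
  have pbadb: "measure M badb \<le> sqrt 3 * exp (- L)"
  proof -
    have x0: "0 \<le> 3 * L" using L0 by simp
    have "measure M badb \<le> sqrt 3 ^ card Bb * exp (- (3 * L) / 3)"
      unfolding badb_def Zb_def using Bb by (intro S.quad_tail[OF _ _ _ x0]) auto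
    also have "sqrt 3 ^ card Bb \<le> sqrt 3 ^ 1"
      using Bb by (intro power_increasing) auto
    finally show ?thesis by simp
  qed
  have sumw: "(\<Sum>F\<in>Fin. (if card F = 0 then sqrt 3 else 2 powr (- r F))) \<le> sqrt 3 + 1"
  proof -
    have e0: "{} \<in> Fin" using cl by (simp add: Fin_def coding_length_def)
    have "(\<Sum>F\<in>Fin. (if card F = 0 then sqrt 3 else 2 powr (- r F)))
        = (if card ({}::'p set) = 0 then sqrt 3 else 2 powr (- r {})) + (\<Sum>F\<in>Fin - {{}}. (if card F = 0 then sqrt 3 else 2 powr (- r F)))"
      by (rule sum.remove[OF _ e0]) simp
    also have "(\<Sum>F\<in>Fin - {{}}. (if card F = 0 then sqrt 3 else 2 powr (- r F))) = (\<Sum>F\<in>{F. F \<noteq> {} \<and> cl F \<noteq> \<infinity>}. (2::real) powr (- real_of_ereal (cl F)))"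
      by (intro sum.cong) (auto simp: Fin_def r_def)
    also have "\<dots> \<le> 1" using cl by (simp add: coding_length_def)
    finally show ?thesis by simp
  qed
  have "measure M U \<le> measure M (\<Union>F\<in>Fin. bad F) + measure M badb"
    unfolding U_def by (rule measure_Un_le) (use bad_m badb_m in auto)
  also have "measure M (\<Union>F\<in>Fin. bad F) \<le> (\<Sum>F\<in>Fin. measure M (bad F))"
    by (rule S.finite_measure_subadditive_finite) (use bad_m in auto)
  also have "(\<Sum>F\<in>Fin. measure M (bad F)) \<le> (\<Sum>F\<in>Fin. exp (- L) * (if card F = 0 then sqrt 3 else 2 powr (- r F)))"
    by (rule sum_mono) (rule pbad)
  also have "\<dots> = exp (- L) * (\<Sum>F\<in>Fin. (if card F = 0 then sqrt 3 else 2 powr (- r F)))"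
    by (simp add: sum_distrib_left)
  also have "\<dots> \<le> exp (- L) * (sqrt 3 + 1)"
    using sumw by (intro mult_left_mono) auto
  finally have "measure M U \<le> exp (- L) * (sqrt 3 + 1) + sqrt 3 * exp (- L)"
    using pbadb by simp
  also have "\<dots> = (\<eta> / 6) * (2 * sqrt 3 + 1)" by (simp add: eL field_simps)
  also have "\<dots> < \<eta>" using sqrt3_lt2 \<open>0 < \<eta>\<close> by simp
  finally have pU: "measure M U < \<eta>" .
  have pA: "measure M A > 1 - \<eta>" unfolding A_def using S.prob_compl[OF U_m] pU by simp
  have det: "(let Ey = (\<chi> i. prob_space.expectation M (\<lambda>\<omega>'. y \<omega>' $ i)) in
         ereal ((norm (X *v \<beta>pen l \<omega> - Ey))\<^sup>2)
         \<le> ereal ((1 + a)\<^sup>2 * (norm (X *v \<beta>bar - Ey))\<^sup>2)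
            + ereal ((1 + a) * l) * cc cl \<beta>bar
            + ereal (\<sigma>\<^sup>2 * (10 + 5 * a + 7 * inverse a) * ln (6 / \<eta>)))"
    if \<omega>A: "\<omega> \<in> A" and l: "l > 7.4 * \<sigma>\<^sup>2" and a: "a \<ge> 7.4 * \<sigma>\<^sup>2 / (l - 7.4 * \<sigma>\<^sup>2)" for \<omega> l a
  proof -
    have \<omega>: "\<omega> \<in> space M" using \<omega>A by (simp add: A_def)
    have l0: "0 < l" using l zero_le_power2[of \<sigma>] by linarith
    have lp: "0 < l - 7.4 * \<sigma>\<^sup>2" using l by simp
    have "0 \<le> 7.4 * \<sigma>\<^sup>2 / (l - 7.4 * \<sigma>\<^sup>2)" using lp by simp
    then have a0: "0 \<le> a" using a by linarith
    define bh where "bh = \<beta>pen l \<omega>"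
    obtain Fh where Fh: "supp bh \<subseteq> Fh" "cc cl bh = cc_set cl Fh" using cc_attained by blast
    have min0: "ereal (Qhat X (y \<omega>) bh) + ereal l * cc cl bh \<le> ereal (Qhat X (y \<omega>) 0) + ereal l * cc cl 0"
      unfolding bh_def by (rule minimizer[OF l0 \<omega>])
    have ccfin: "cc cl bh \<noteq> \<infinity>"
    proof
      assume inf: "cc cl bh = \<infinity>"
      have li: "ereal l * cc cl bh = \<infinity>" using l0 inf by simp
      have e: "ereal (Qhat X (y \<omega>) bh) + ereal l * cc cl bh = \<infinity>" unfolding li by simp
      have "ereal (Qhat X (y \<omega>) bh) + ereal l * cc cl bh \<le> ereal (Qhat X (y \<omega>) 0)"
        using min0 by (simp add: cc_zero[OF cl])
      then show False unfolding e by simp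
    qed
    have clFh: "cl Fh = ereal (r Fh)"
    proof -
      have "cl Fh \<noteq> \<infinity>" using ccfin Fh(2) by (auto simp: cc_set_def)
      moreover have "0 \<le> cl Fh" using cl by (simp add: coding_length_def)
      ultimately show ?thesis unfolding r_def by (cases "cl Fh") auto
    qed
    have FhFin: "Fh \<in> Fin" using clFh by (simp add: Fin_def)
    define c where "c = real (card Fh) + r Fh"
    have c0: "0 \<le> c" using r0[of Fh] by (simp add: c_def)
    have cch: "cc cl bh = ereal c" using Fh(2) clFh by (simp add: cc_set_def c_def)
    show ?thesis
    proof (cases "cc cl \<beta>bar = \<infinity>")
      case True
      have "0 < (1 + a) * l" using a0 l0 by simp
      moreover have "1 + a \<noteq> 0" "l \<noteq> 0" using a0 l0 by auto
      ultimately show ?thesis using True by (simp add: Let_def)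
    next
      case False
      have "0 \<le> cc cl \<beta>bar" by (rule cc_nonneg[OF cl])
      then obtain cb where cb: "cc cl \<beta>bar = ereal cb" using False by (cases "cc cl \<beta>bar") auto
      define v where "v = S.ev \<omega>"
      have yv: "y \<omega> = f + v" by (simp add: vec_eq_iff v_def S.ev_def S.e_def f_def)
      define d where "d = X *v bh - f"
      define D where "D = norm d"
      define Db where "Db = norm db"
      define p where "p = v \<bullet> d"
      define q where "q = v \<bullet> db"
      have Qeq: "Qhat X (y \<omega>) \<beta> = (norm (X *v \<beta> - f))\<^sup>2 - 2 * (v \<bullet> (X *v \<beta> - f)) + (norm v)\<^sup>2" for \<beta>
      proof -
        have "X *v \<beta> - y \<omega> = (X *v \<beta> - f) - v" by (simp add: yv)
        have g: "(norm (u - w))\<^sup>2 = (norm u)\<^sup>2 - 2 * (w \<bullet> u) + (norm w)\<^sup>2" for u w :: "real^'n"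
          by (simp add: power2_norm_eq_inner inner_diff_left inner_diff_right inner_commute)
        show ?thesis unfolding Qhat_def \<open>X *v \<beta> - y \<omega> = (X *v \<beta> - f) - v\<close> by (rule g)
      qed
      have minb: "ereal (Qhat X (y \<omega>) bh) + ereal l * cc cl bh \<le> ereal (Qhat X (y \<omega>) \<beta>bar) + ereal l * cc cl \<beta>bar"
        unfolding bh_def by (rule minimizer[OF l0 \<omega>])
      then have "Qhat X (y \<omega>) bh + l * c \<le> Qhat X (y \<omega>) \<beta>bar + l * cb"
        by (simp add: cch cb)
      then have main: "D\<^sup>2 \<le> Db\<^sup>2 + l * cb - l * c + 2 * p - 2 * q"
        unfolding Qeq D_def Db_def p_def q_def d_def db_def by simp
      have dspan: "d \<in> span (BF Fh)"
      proof -
        have "X *v bh \<in> span ((\<lambda>j. column j X) ` Fh)" by (rule mv_in_span[OF Fh(1)])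
        also have "\<dots> \<subseteq> span (cols Fh)" unfolding cols_def by (rule span_mono) auto
        finally have "X *v bh \<in> span (cols Fh)" .
        moreover have "f \<in> span (cols Fh)" unfolding cols_def by (rule span_base) simp
        ultimately have "d \<in> span (cols Fh)" unfolding d_def by (rule span_diff)
        then show ?thesis using BF[of Fh] by simp
      qed
      have ipv: "S.ip \<omega> b = v \<bullet> b" for b by (simp add: S.ip_ev v_def)
      have pZ: "p\<^sup>2 \<le> D\<^sup>2 * ZF Fh \<omega>"
        unfolding p_def D_def ZF_def ipv using BF[of Fh] dspan by (intro cs_span) auto
      have qZ: "q\<^sup>2 \<le> Db\<^sup>2 * Zb \<omega>"
        unfolding q_def Db_def Zb_def ipv using Bb by (intro cs_span) (auto intro: span_base)
      have Zle: "ZF Fh \<omega> \<le> \<sigma>\<^sup>2 * (7.4 * c + 3.5 * L)"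
        using \<omega>A FhFin \<omega> unfolding A_def U_def bad_def c_def by auto
      have Zble: "Zb \<omega> \<le> \<sigma>\<^sup>2 * (3 * L)"
        using \<omega>A \<omega> unfolding A_def U_def badb_def by auto
      have Z0: "0 \<le> ZF Fh \<omega>" unfolding ZF_def by (simp add: sum_nonneg)
      have Zb0: "0 \<le> Zb \<omega>" unfolding Zb_def by (simp add: sum_nonneg)
      have fin: "D\<^sup>2 \<le> (1 + a)\<^sup>2 * Db\<^sup>2 + (1 + a) * l * cb + \<sigma>\<^sup>2 * (10 + 5 * a + 7 * inverse a) * L"
        by (rule final_ineq[OF _ _ Z0 Zb0 c0 L0 main pZ qZ Zle Zble l a]) (simp_all add: D_def Db_def)
      show ?thesis
        using fin by (simp add: Let_def f_eq cb D_def Db_def d_def db_def bh_def L_def)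
    qed
  qed
  show ?thesis
    using A_m pA det by (intro bexI[of _ A]) (auto simp: S.prob_space_axioms)
qed

end
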